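(* Let $Y_1,Y_2\subsetneq\mathbb{C}$ be conformally equivalent domains and $\Omega\subset\mathbb{C}$ an arbitrary domain. Then there exist $a\in Y_1$ and $b\in Y_2$ such that $\mathscr{C}_{\Omega}^{Y_1,a}(w)=\mathscr{C}_{\Omega}^{Y_2,b}(w)$ for every $w\in\Omega$.
   Context: $\mathbb{D}=\{z\in\mathbb{C}:|z|<1\}$. For domains $\Omega\subset\mathbb{C}$, $Y\subsetneq\mathbb{C}$, and points $w\in\Omega$, $s\in Y$, let $\mathcal{H}^s_w(\Omega,Y)$ be the set of holomorphic maps $h:\Omega\to Y$ with $h(w)=s$ and $h(z)\neq s$ for all $z\in\Omega\setminus\{w\}$. For a domain $Y\subsetneq\mathbb{C}$ and $v\in Y$, the Hurwitz density is $\eta_Y(v)=2/r_Y(v)$, where $r_Y(v)=\max\{h'(0): h:\mathbb{D}\to Y \text{ holomorphic},\ h(0)=v,\ h(z)\neq v \text{ for } z\in\mathbb{D}\setminus\{0\},\ h'(0)>0\}$. The Carathéodory density of the Hurwitz metric of $\Omega$ relative to $Y$ is $\mathscr{C}_{\Omega}^{Y,s}(w)=\sup\{\eta_Y(h(w))|h'(w)| : h\in\mathcal{H}^s_w(\Omega,Y)\}$, defined to be $0$ if $\mathcal{H}^s_w(\Omega,Y)=\emptyset$. *)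

theory Defs
  imports "HOL-Complex_Analysis.Complex_Analysis"
begin

definition is_domain :: "complex set \<Rightarrow> bool" where
  "is_domain S \<longleftrightarrow> open S \<and> connected S \<and> S \<noteq> {}"

definition hurwitz_maps :: "complex set \<Rightarrow> complex set \<Rightarrow> complex \<Rightarrow> complex \<Rightarrow> (complex \<Rightarrow> complex) set" where
  "hurwitz_maps \<Omega> Y w s =
     {h. h holomorphic_on \<Omega> \<and> h ` \<Omega> \<subseteq> Y \<and> h w = s \<and> (\<forall>z\<in>\<Omega> - {w}. h z \<noteq> s)}"

text \<open>r_Y(v): the extremal value of h'(0) over maps in H^v_0(D, Y) with h'(0) > 0
  (the paper shows the maximum is attained, so it equals the supremum).\<close>
definition hurwitz_radius :: "complex set \<Rightarrow> complex \<Rightarrow> real" where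
  "hurwitz_radius Y v =
     Sup {r. \<exists>h \<in> hurwitz_maps (ball 0 1) Y 0 v. deriv h 0 = complex_of_real r \<and> r > 0}"

definition hurwitz_density :: "complex set \<Rightarrow> complex \<Rightarrow> real" where
  "hurwitz_density Y v = 2 / hurwitz_radius Y v"

definition caratheodory_hurwitz :: "complex set \<Rightarrow> complex set \<Rightarrow> complex \<Rightarrow> complex \<Rightarrow> real" where
  "caratheodory_hurwitz \<Omega> Y s w =
     (if hurwitz_maps \<Omega> Y w s = {} then 0
      else Sup {hurwitz_density Y (h w) * cmod (deriv h w) | h. h \<in> hurwitz_maps \<Omega> Y w s})"

definition conformally_equivalent :: "complex set \<Rightarrow> complex set \<Rightarrow> bool" where
  "conformally_equivalent A B \<longleftrightarrow>
     (\<exists>f g. f holomorphic_on A \<and> g holomorphic_on B \<and> f ` A = B \<and> g ` B = A \<and>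
            (\<forall>z\<in>A. g (f z) = z) \<and> (\<forall>z\<in>B. f (g z) = z))"

end

theory Submission
  imports Defs
begin


lemma deriv_bound:
  fixes h :: "complex \<Rightarrow> complex"
  assumes holh: "h holomorphic_on ball 0 1" and h0: "h 0 = a"
    and ha: "\<And>z. z \<in> ball 0 1 \<Longrightarrow> z \<noteq> 0 \<Longrightarrow> h z \<noteq> a"
    and hp: "\<And>z. z \<in> ball 0 1 \<Longrightarrow> h z \<noteq> p"
  shows "cmod (deriv h 0) \<le> 4 * (1 + (exp(pi * exp(pi * (2 + 2 * 1 + 12 * (1/2) / (1 - 1/2)))))\<^sup>2) * cmod (p - a)"
proof -
  define K where "K = exp(pi * exp(pi * (2 + 2 * 1 + 12 * (1/2) / (1 - (1/2::real)))))"
  have pa: "p \<noteq> a" using hp[of 0] h0 by auto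
  define \<phi> where "\<phi> = (\<lambda>z. (h z - a) / (p - a))"
  have hol\<phi>: "\<phi> holomorphic_on ball 0 1" unfolding \<phi>_def using pa by (intro holomorphic_intros holh) auto
  have \<phi>1: "1 - \<phi> z \<noteq> 0" if "z \<in> ball 0 1" for z
    using hp[OF that] pa by (auto simp: \<phi>_def field_simps)
  have \<phi>0: "\<phi> z = 0 \<longleftrightarrow> z = 0" if "z \<in> ball 0 1" for z
    using ha[OF that] pa h0 by (auto simp: \<phi>_def)
  have hol1: "(\<lambda>z. 1 - \<phi> z) holomorphic_on ball 0 1" by (intro holomorphic_intros hol\<phi>)
  obtain s where hols: "s holomorphic_on ball 0 1" and s2: "\<And>z. z \<in> ball 0 1 \<Longrightarrow> 1 - \<phi> z = s z ^ 2"
    using contractible_imp_holomorphic_sqrt[OF hol1 convex_imp_contractible[OF convex_ball] \<phi>1] by blast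
  define \<sigma> where "\<sigma> = s 0"
  have \<sigma>2: "\<sigma> ^ 2 = 1" using s2[of 0] \<phi>0[of 0] by (simp add: \<sigma>_def)
  define F where "F = (\<lambda>z. - \<sigma> * s (z / 2))"
  have "F holomorphic_on cball 0 1"
    unfolding F_def
    by (intro holomorphic_intros holomorphic_on_compose_gen[OF _ hols, unfolded o_def]) auto
  have F0: "norm (F 0) \<le> 1"
  proof -
    have "norm \<sigma> ^ 2 = 1" using \<sigma>2 by (metis norm_one norm_power)
    then have "norm \<sigma> = 1" using norm_ge_zero[of \<sigma>] by (auto simp add: power2_eq_1_iff)
    then show ?thesis by (simp add: F_def \<sigma>_def norm_mult)
  qed
  have Fn: "\<not> (F z = 0 \<or> F z = 1)" if "z \<in> cball 0 1" for z
  proof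
    have zb: "z/2 \<in> ball 0 1" using that by (auto simp: norm_divide)
    assume "F z = 0 \<or> F z = 1"
    then show False
    proof
      assume "F z = 0"
      then have "s (z/2) = 0" using \<sigma>2 by (auto simp: F_def)
      then show False using s2[OF zb] \<phi>1[OF zb] by simp
    next
      assume "F z = 1"
      then have "\<sigma> * (- \<sigma> * s (z / 2)) = \<sigma>" by (simp add: F_def)
      then have "- (\<sigma> * \<sigma>) * s (z / 2) = \<sigma>" by (simp add: algebra_simps)
      then have "s (z/2) = - \<sigma>" using \<sigma>2 by (simp add: power2_eq_square) (metis minus_equation_iff)
      then have "\<phi> (z/2) = 0" using s2[OF zb] \<sigma>2 by simp
      then have "z = 0" using \<phi>0[OF zb] by simp
      then show False using \<open>s (z/2) = - \<sigma>\<close> \<sigma>2 by (simp add: \<sigma>_def)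
    qed
  qed
  have Fb: "norm (F z) \<le> K" if "norm z \<le> 1/2" for z
    unfolding K_def
    by (rule Schottky[OF \<open>F holomorphic_on cball 0 1\<close> F0 Fn]) (use that in auto)
  have \<phi>b: "norm (\<phi> z) \<le> 1 + K^2" if "norm z \<le> 1/4" for z
  proof -
    have zb: "z \<in> ball 0 1" using that by auto
    have "norm \<sigma> ^ 2 = 1" using \<sigma>2 by (metis norm_one norm_power)
    then have "norm \<sigma> = 1" using norm_ge_zero[of \<sigma>] by (auto simp add: power2_eq_1_iff)
    then have "norm (s z) = norm (F (2*z))" by (simp add: F_def norm_mult)
    also have "\<dots> \<le> K" using Fb[of "2*z"] that by (simp add: norm_mult)
    finally have sK: "norm (s z) \<le> K" .
    have "\<phi> z = 1 - s z ^ 2" using s2[OF zb] by (simp add: algebra_simps)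
    then have "norm (\<phi> z) \<le> norm (1::complex) + norm (s z ^ 2)" by (simp only: norm_triangle_ineq4)
    then have "norm (\<phi> z) \<le> 1 + norm (s z) ^ 2" by (simp add: norm_power)
    also have "\<dots> \<le> 1 + K^2" using sK by (simp add: power_mono)
    finally show ?thesis .
  qed
  have "norm ((deriv ^^ 1) \<phi> 0) \<le> fact 1 * (1 + K^2) / (1/4)^1"
    apply (rule Cauchy_inequality)
    using hol\<phi> apply (rule holomorphic_on_subset) apply auto[1]
    apply (rule holomorphic_on_imp_continuous_on) using hol\<phi> apply (rule holomorphic_on_subset) apply auto[1]
    apply simp
    using \<phi>b by (simp add: norm_minus_commute)
  then have d\<phi>: "norm (deriv \<phi> 0) \<le> 4 * (1 + K^2)" by simp
  have "(h has_field_derivative deriv h 0) (at 0)"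
    using holh by (intro holomorphic_derivI[OF holh]) auto
  then have "(\<phi> has_field_derivative deriv h 0 / (p - a)) (at 0)"
    unfolding \<phi>_def using pa by (auto intro!: derivative_eq_intros)
  then have "deriv \<phi> 0 = deriv h 0 / (p - a)" by (rule DERIV_imp_deriv)
  then have "cmod (deriv h 0) = norm (deriv \<phi> 0) * cmod (p - a)" using pa by (simp add: norm_divide)
  also have "\<dots> \<le> 4 * (1 + K^2) * cmod (p - a)" using d\<phi> by (simp add: mult_right_mono)
  finally show ?thesis by (simp add: K_def)
qed



lemma Sup_scale:
  fixes X :: "real set"
  assumes "c > 0" "X \<noteq> {}" "bdd_above X"
  shows "Sup ((\<lambda>r. c * r) ` X) = c * Sup X"
proof (rule cSup_eq_non_empty)
  show "(\<lambda>r. c * r) ` X \<noteq> {}" using assms by auto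
  show "\<And>x. x \<in> (\<lambda>r. c * r) ` X \<Longrightarrow> x \<le> c * Sup X"
    using assms by (auto intro!: mult_left_mono cSup_upper)
  fix y assume y: "\<And>x. x \<in> (\<lambda>r. c * r) ` X \<Longrightarrow> x \<le> y"
  have "Sup X \<le> y / c"
    using assms y by (intro cSup_least) (auto simp: field_simps)
  then show "c * Sup X \<le> y" using assms by (simp add: field_simps)
qed

lemma inv_deriv:
  assumes "open A" "open B" "f holomorphic_on A" "g holomorphic_on B" "f ` A \<subseteq> B"
    "\<And>z. z \<in> A \<Longrightarrow> g (f z) = z" "a \<in> A"
  shows "deriv g (f a) * deriv f a = 1"
proof -
  have df: "(f has_field_derivative deriv f a) (at a)"
    using assms by (intro holomorphic_derivI[of f A]) auto
  have dg: "(g has_field_derivative deriv g (f a)) (at (f a))"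
    using assms by (intro holomorphic_derivI[of g B]) auto
  have "((\<lambda>z. g (f z)) has_field_derivative deriv g (f a) * deriv f a) (at a)"
    using DERIV_chain2[OF dg df] .
  then have "((\<lambda>z. z) has_field_derivative deriv g (f a) * deriv f a) (at a)"
    by (rule has_field_derivative_transform_within_open[OF _ \<open>open A\<close> \<open>a \<in> A\<close>]) (use assms in auto)
  moreover have "((\<lambda>z. z) has_field_derivative 1) (at a)" by (rule DERIV_ident)
  ultimately show ?thesis by (rule DERIV_unique)
qed

definition Rset :: "complex set \<Rightarrow> complex \<Rightarrow> real set" where
  "Rset Y v = {r. \<exists>h \<in> hurwitz_maps (ball 0 1) Y 0 v. deriv h 0 = complex_of_real r \<and> r > 0}"

lemma maps_incl:
  assumes "open A" "open B" "f holomorphic_on A" "g holomorphic_on B" "f ` A \<subseteq> B"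
    "\<And>z. z \<in> A \<Longrightarrow> g (f z) = z" "a \<in> A" "open \<Omega>" "w \<in> \<Omega>"
    "h \<in> hurwitz_maps \<Omega> A w a"
  shows "(\<lambda>z. f (h z)) \<in> hurwitz_maps \<Omega> B w (f a)"
    "deriv (\<lambda>z. f (h z)) w = deriv f a * deriv h w"
proof -
  have holh: "h holomorphic_on \<Omega>" and hA: "h ` \<Omega> \<subseteq> A" and hw: "h w = a"
    and hne: "\<And>z. z \<in> \<Omega> - {w} \<Longrightarrow> h z \<noteq> a"
    using assms(10) by (auto simp: hurwitz_maps_def)
  show "(\<lambda>z. f (h z)) \<in> hurwitz_maps \<Omega> B w (f a)"
    unfolding hurwitz_maps_def
  proof (intro CollectI conjI ballI)
    show "(\<lambda>z. f (h z)) holomorphic_on \<Omega>"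
      using holomorphic_on_compose_gen[OF holh assms(3) hA] by (simp add: o_def)
    show "(\<lambda>z. f (h z)) ` \<Omega> \<subseteq> B" using hA assms(5) by auto
    show "f (h w) = f a" using hw by simp
    fix z assume z: "z \<in> \<Omega> - {w}"
    show "f (h z) \<noteq> f a"
    proof
      assume "f (h z) = f a"
      then have "g (f (h z)) = g (f a)" by simp
      then have "h z = a" using assms(6)[of "h z"] assms(6)[OF assms(7)] hA z by auto
      then show False using hne[OF z] by simp
    qed
  qed
  have dh: "(h has_field_derivative deriv h w) (at w)"
    using holh assms by (intro holomorphic_derivI[of h \<Omega>]) auto
  have df0: "(f has_field_derivative deriv f a) (at a)"
    using assms by (intro holomorphic_derivI[of f A]) auto
  then have df: "(f has_field_derivative deriv f a) (at (h w))" using hw by simp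
  show "deriv (\<lambda>z. f (h z)) w = deriv f a * deriv h w"
    using DERIV_chain2[OF df dh] by (rule DERIV_imp_deriv)
qed

lemma radius_incl:
  assumes "open A" "open B" "f holomorphic_on A" "g holomorphic_on B" "f ` A \<subseteq> B"
    "\<And>z. z \<in> A \<Longrightarrow> g (f z) = z" "a \<in> A"
  shows "(\<lambda>r. cmod (deriv f a) * r) ` Rset A a \<subseteq> Rset B (f a)"
proof
  fix x assume "x \<in> (\<lambda>r. cmod (deriv f a) * r) ` Rset A a"
  then obtain r h where x: "x = cmod (deriv f a) * r" and h: "h \<in> hurwitz_maps (ball 0 1) A 0 a"
    and hr: "deriv h 0 = complex_of_real r" and r0: "r > 0"
    unfolding Rset_def by auto
  define d where "d = deriv f a"
  have "deriv g (f a) * d = 1" unfolding d_def by (rule inv_deriv[OF assms])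
  then have d0: "d \<noteq> 0" by auto
  define u where "u = d / complex_of_real (cmod d)"
  have u1: "cmod u = 1" using d0 by (simp add: u_def norm_divide)
  then have u0: "u \<noteq> 0" by auto
  define k where "k = (\<lambda>z. h (z / u))"
  have holh: "h holomorphic_on ball 0 1" using h by (simp add: hurwitz_maps_def)
  have kmap: "k \<in> hurwitz_maps (ball 0 1) A 0 a"
    using h u1 u0 unfolding hurwitz_maps_def k_def
    apply (auto simp: norm_divide)
     apply (rule holomorphic_on_compose_gen[OF _ holh, unfolded o_def])
      apply (auto intro!: holomorphic_intros simp: norm_divide)
    done
  have dh0: "(h has_field_derivative deriv h 0) (at 0)"
    using holh by (intro holomorphic_derivI[of h "ball 0 1"]) auto
  then have dh: "(h has_field_derivative deriv h 0) (at (0 / u))" by simp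
  have "((\<lambda>z. z / u) has_field_derivative 1 / u) (at 0)"
    using u0 by (auto intro!: derivative_eq_intros)
  from DERIV_chain2[OF dh this] have "(k has_field_derivative deriv h 0 * (1/u)) (at 0)"
    by (simp add: k_def)
  then have dk: "deriv k 0 = deriv h 0 / u" by (simp add: DERIV_imp_deriv)
  have "(\<lambda>z. f (k z)) \<in> hurwitz_maps (ball 0 1) B 0 (f a)"
    and dfk: "deriv (\<lambda>z. f (k z)) 0 = deriv f a * deriv k 0"
    using maps_incl[OF assms _ _ kmap] by auto
  moreover have "deriv f a * deriv k 0 = complex_of_real x"
    using d0 unfolding dk hr x d_def[symmetric] u_def by (simp add: field_simps)
  moreover have "x > 0" using x r0 d0 d_def by simp
  ultimately show "x \<in> Rset B (f a)" unfolding Rset_def by auto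
qed



lemma Rset_nonempty:
  assumes "open Y" "a \<in> Y" shows "Rset Y a \<noteq> {}"
proof -
  obtain e where e: "e > 0" "ball a e \<subseteq> Y" using assms open_contains_ball by blast
  define h where "h = (\<lambda>z. a + complex_of_real e * z)"
  have "h \<in> hurwitz_maps (ball 0 1) Y 0 a"
    unfolding hurwitz_maps_def h_def
  proof (intro CollectI conjI ballI subsetI)
    show "(\<lambda>z. a + complex_of_real e * z) holomorphic_on ball 0 1" by (intro holomorphic_intros)
    fix x assume "x \<in> (\<lambda>z. a + complex_of_real e * z) ` ball 0 1"
    then obtain z where "cmod z < 1" "x = a + complex_of_real e * z" by auto
    then have "x \<in> ball a e" using e by (simp add: dist_norm norm_mult)
    then show "x \<in> Y" using e by auto
  next
    fix z :: complex assume "z \<in> ball 0 1 - {0}" then show "a + complex_of_real e * z \<noteq> a" using e by auto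
  qed simp
  moreover have "deriv h 0 = complex_of_real e"
    unfolding h_def by (rule DERIV_imp_deriv) (auto intro!: derivative_eq_intros)
  ultimately show ?thesis using e unfolding Rset_def by auto
qed



lemma Rset_bdd:
  assumes "p \<notin> Y" shows "bdd_above (Rset Y a)"
proof -
  define C where "C = 4 * (1 + (exp(pi * exp(pi * (2 + 2 * 1 + 12 * (1/2) / (1 - 1/2)))))\<^sup>2) * cmod (p - a)"
  have "r \<le> C" if rin: "r \<in> Rset Y a" for r
  proof -
    obtain h where h: "h \<in> hurwitz_maps (ball 0 1) Y 0 a" and hr: "deriv h 0 = complex_of_real r" and r0: "r > 0"
      using rin unfolding Rset_def mem_Collect_eq by blast
    have "cmod (deriv h 0) \<le> C" unfolding C_def
      by (rule deriv_bound) (use h assms in \<open>auto simp: hurwitz_maps_def image_subset_iff\<close>)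
    then show ?thesis using hr r0 by simp
  qed
  then show ?thesis by (rule bdd_aboveI[where M=C])
qed

theorem corollary3p15:
  fixes Y1 Y2 \<Omega> :: "complex set"
  assumes "is_domain Y1" and "Y1 \<noteq> UNIV"
      and "is_domain Y2" and "Y2 \<noteq> UNIV"
      and "conformally_equivalent Y1 Y2"
      and "is_domain \<Omega>"
  shows "\<exists>a\<in>Y1. \<exists>b\<in>Y2. \<forall>w\<in>\<Omega>.
           caratheodory_hurwitz \<Omega> Y1 a w = caratheodory_hurwitz \<Omega> Y2 b w"
proof -
  obtain f g where hf: "f holomorphic_on Y1" and hg: "g holomorphic_on Y2" and fY: "f ` Y1 = Y2"
    and gY: "g ` Y2 = Y1" and gf: "\<And>z. z \<in> Y1 \<Longrightarrow> g (f z) = z" and fg: "\<And>z. z \<in> Y2 \<Longrightarrow> f (g z) = z"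
    using assms(5) unfolding conformally_equivalent_def by (elim exE conjE) blast
  have o1: "open Y1" and o2: "open Y2" and oO: "open \<Omega>"
    using assms by (auto simp: is_domain_def)
  obtain a where a: "a \<in> Y1" using assms(1) by (auto simp: is_domain_def)
  define b where "b = f a"
  have b: "b \<in> Y2" using a fY b_def by auto
  have gb: "g b = a" using gf a b_def by simp
  obtain p where p: "p \<notin> Y1" using assms(2) by auto
  have fsub: "f ` Y1 \<subseteq> Y2" and gsub: "g ` Y2 \<subseteq> Y1" using fY gY by auto
  note F = o1 o2 hf hg fsub gf a
  note G = o2 o1 hg hf gsub fg b
  define c where "c = cmod (deriv f a)"
  define d where "d = cmod (deriv g b)"
  have "deriv g (f a) * deriv f a = 1" by (rule inv_deriv[OF F])
  then have cd: "d * c = 1" unfolding c_def d_def b_def by (metis norm_mult norm_one)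
  then have "c \<noteq> 0" by auto
  then have c0: "c > 0" unfolding c_def by simp
  have inc1: "(\<lambda>r. c * r) ` Rset Y1 a \<subseteq> Rset Y2 b"
    using radius_incl[OF F] unfolding c_def b_def .
  have inc2: "(\<lambda>r. d * r) ` Rset Y2 b \<subseteq> Rset Y1 a"
    using radius_incl[OF G] unfolding d_def gb .
  have Req: "Rset Y2 b = (\<lambda>r. c * r) ` Rset Y1 a"
  proof
    show "Rset Y2 b \<subseteq> (\<lambda>r. c * r) ` Rset Y1 a"
    proof
      fix x assume "x \<in> Rset Y2 b"
      then have "d * x \<in> Rset Y1 a" using inc2 by auto
      moreover have "x = c * (d * x)" using cd by (simp add: algebra_simps)
      ultimately show "x \<in> (\<lambda>r. c * r) ` Rset Y1 a" by blast
    qed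
  qed (rule inc1)
  have rad1: "hurwitz_radius Y1 a = Sup (Rset Y1 a)"
    and rad2: "hurwitz_radius Y2 b = Sup (Rset Y2 b)"
    by (simp_all add: hurwitz_radius_def Rset_def)
  have rr: "hurwitz_radius Y2 b = c * hurwitz_radius Y1 a"
    unfolding rad1 rad2 Req
    by (rule Sup_scale[OF c0 Rset_nonempty[OF o1 a] Rset_bdd[OF p]])
  have e1: "hurwitz_density Y2 b * c = hurwitz_density Y1 a"
    unfolding hurwitz_density_def rr using c0 by (simp add: field_simps)
  have e2: "hurwitz_density Y1 a * d = hurwitz_density Y2 b"
  proof -
    have dc: "d = 1 / c" using cd c0 by (simp add: field_simps)
    show ?thesis unfolding hurwitz_density_def rr dc using c0 by simp
  qed
  show ?thesis
  proof (intro bexI[OF _ a] bexI[OF _ b] ballI)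
    fix w assume w: "w \<in> \<Omega>"
    have S1: "x \<in> {hurwitz_density Y2 (k w) * cmod (deriv k w) | k. k \<in> hurwitz_maps \<Omega> Y2 w b}"
      if xin: "x \<in> {hurwitz_density Y1 (h w) * cmod (deriv h w) | h. h \<in> hurwitz_maps \<Omega> Y1 w a}" for x
    proof -
      obtain h where h: "h \<in> hurwitz_maps \<Omega> Y1 w a" and x: "x = hurwitz_density Y1 (h w) * cmod (deriv h w)"
        using xin by blast
      have hw: "h w = a" using h by (simp add: hurwitz_maps_def)
      have k: "(\<lambda>z. f (h z)) \<in> hurwitz_maps \<Omega> Y2 w b"
        and dk: "deriv (\<lambda>z. f (h z)) w = deriv f a * deriv h w"
        using maps_incl[OF F oO w h] unfolding b_def by auto
      have "x = hurwitz_density Y2 ((\<lambda>z. f (h z)) w) * cmod (deriv (\<lambda>z. f (h z)) w)"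
        unfolding x dk hw b_def[symmetric] norm_mult c_def[symmetric] e1[symmetric] by simp
      then show ?thesis unfolding mem_Collect_eq
        by (intro exI[where x="\<lambda>z. f (h z)"] conjI) (use k in auto)
    qed
    have S2: "x \<in> {hurwitz_density Y1 (h w) * cmod (deriv h w) | h. h \<in> hurwitz_maps \<Omega> Y1 w a}"
      if xin: "x \<in> {hurwitz_density Y2 (k w) * cmod (deriv k w) | k. k \<in> hurwitz_maps \<Omega> Y2 w b}" for x
    proof -
      obtain h where h: "h \<in> hurwitz_maps \<Omega> Y2 w b" and x: "x = hurwitz_density Y2 (h w) * cmod (deriv h w)"
        using xin by blast
      have hw: "h w = b" using h by (simp add: hurwitz_maps_def)
      have k: "(\<lambda>z. g (h z)) \<in> hurwitz_maps \<Omega> Y1 w a"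
        and dk: "deriv (\<lambda>z. g (h z)) w = deriv g b * deriv h w"
        using maps_incl[OF G oO w h] unfolding gb by auto
      have "x = hurwitz_density Y1 ((\<lambda>z. g (h z)) w) * cmod (deriv (\<lambda>z. g (h z)) w)"
        unfolding x dk hw gb norm_mult d_def[symmetric] e2[symmetric] by simp
      then show ?thesis unfolding mem_Collect_eq
        by (intro exI[where x="\<lambda>z. g (h z)"] conjI) (use k in auto)
    qed
    have E: "(hurwitz_maps \<Omega> Y1 w a = {}) \<longleftrightarrow> (hurwitz_maps \<Omega> Y2 w b = {})"
    proof
      assume e: "hurwitz_maps \<Omega> Y1 w a = {}"
      show "hurwitz_maps \<Omega> Y2 w b = {}"
      proof (rule ccontr)
        assume "hurwitz_maps \<Omega> Y2 w b \<noteq> {}"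
        then obtain k where "k \<in> hurwitz_maps \<Omega> Y2 w b" by blast
        then have "(\<lambda>z. g (k z)) \<in> hurwitz_maps \<Omega> Y1 w a"
          using maps_incl(1)[OF G oO w] gb by simp
        then show False using e by simp
      qed
    next
      assume e: "hurwitz_maps \<Omega> Y2 w b = {}"
      show "hurwitz_maps \<Omega> Y1 w a = {}"
      proof (rule ccontr)
        assume "hurwitz_maps \<Omega> Y1 w a \<noteq> {}"
        then obtain k where "k \<in> hurwitz_maps \<Omega> Y1 w a" by blast
        then have "(\<lambda>z. f (k z)) \<in> hurwitz_maps \<Omega> Y2 w b"
          using maps_incl(1)[OF F oO w] b_def by simp
        then show False using e by simp
      qed
    qed
    have "{hurwitz_density Y1 (h w) * cmod (deriv h w) | h. h \<in> hurwitz_maps \<Omega> Y1 w a}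
        = {hurwitz_density Y2 (k w) * cmod (deriv k w) | k. k \<in> hurwitz_maps \<Omega> Y2 w b}"
      by (intro equalityI subsetI) (erule S1, erule S2)
    then show "caratheodory_hurwitz \<Omega> Y1 a w = caratheodory_hurwitz \<Omega> Y2 b w"
      unfolding caratheodory_hurwitz_def by (simp only: E)
  qed
qed

end
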